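(* Let $\alpha\in[0,1)$ and let $s\geq 2$ be an integer with $n=3s-1\geq f(\alpha)$. Then $\rho_{\alpha}\big(K_s\vee(2s-1)K_1\big)<n-3<\eta(n)$.
   Context: For a graph $G$, $A_{\alpha}(G)=\alpha D(G)+(1-\alpha)A(G)$ where $D(G)$ is the diagonal degree matrix and $A(G)$ the adjacency matrix, and $\rho_{\alpha}(G)$ is the largest eigenvalue of $A_{\alpha}(G)$. $\vee$ denotes join, $K_m$ the complete graph on $m$ vertices, $tK_1$ the edgeless graph on $t$ vertices. Define $f(\alpha)=14$ if $\alpha\in[0,\frac12]$, $f(\alpha)=17$ if $\alpha\in(\frac12,\frac23]$, $f(\alpha)=20$ if $\alpha\in(\frac23,\frac34]$, and $f(\alpha)=\frac{5}{1-\alpha}+1$ if $\alpha\in(\frac34,1)$. $\eta(n)$ is the largest root of $x^{3}-((\alpha+1)n+\alpha-4)x^{2}+(\alpha n^{2}+(\alpha^{2}-2\alpha-1)n-2\alpha+1)x-\alpha^{2}n^{2}+(5\alpha^{2}-3\alpha+2)n-10\alpha^{2}+15\alpha-8=0$. *)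

theory Defs
  imports Complex_Main
begin

text \<open>A (simple) graph on the vertex set {0..<n} is given by its number of
vertices n and a symmetric irreflexive adjacency relation adj.
Matrices are functions nat => nat => real indexed by {0..<n}.\<close>

definition degree :: "nat \<Rightarrow> (nat \<Rightarrow> nat \<Rightarrow> bool) \<Rightarrow> nat \<Rightarrow> nat" where
  "degree n adj i = card {j. j < n \<and> adj i j}"

definition A_alpha :: "real \<Rightarrow> nat \<Rightarrow> (nat \<Rightarrow> nat \<Rightarrow> bool) \<Rightarrow> nat \<Rightarrow> nat \<Rightarrow> real" where
  "A_alpha \<alpha> n adj i j =
     \<alpha> * (if i = j then real (degree n adj i) else 0)
     + (1 - \<alpha>) * (if adj i j then 1 else 0)"

definition is_eigenvalue :: "nat \<Rightarrow> (nat \<Rightarrow> nat \<Rightarrow> real) \<Rightarrow> real \<Rightarrow> bool" where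
  "is_eigenvalue n M mu \<longleftrightarrow>
     (\<exists>v :: nat \<Rightarrow> real. (\<exists>i<n. v i \<noteq> 0) \<and>
        (\<forall>i<n. (\<Sum>j<n. M i j * v j) = mu * v i))"

text \<open>Largest eigenvalue of A_alpha(G) (all eigenvalues are real, the matrix being symmetric).\<close>
definition rho_alpha :: "real \<Rightarrow> nat \<Rightarrow> (nat \<Rightarrow> nat \<Rightarrow> bool) \<Rightarrow> real" where
  "rho_alpha \<alpha> n adj = Max {mu. is_eigenvalue n (A_alpha \<alpha> n adj) mu}"

definition complete_graph :: "nat \<Rightarrow> nat \<Rightarrow> bool" where
  "complete_graph i j \<longleftrightarrow> i \<noteq> j"

definition empty_graph :: "nat \<Rightarrow> nat \<Rightarrow> bool" where
  "empty_graph i j \<longleftrightarrow> False"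

text \<open>Join of a graph G on {0..<a} and a graph H on {0..<b}, as a graph on {0..<a+b}:
vertices of H are shifted by a.\<close>
definition graph_join :: "nat \<Rightarrow> (nat \<Rightarrow> nat \<Rightarrow> bool) \<Rightarrow> (nat \<Rightarrow> nat \<Rightarrow> bool) \<Rightarrow> nat \<Rightarrow> nat \<Rightarrow> bool" where
  "graph_join a G H i j \<longleftrightarrow>
     (i < a \<and> j < a \<and> G i j) \<or> (a \<le> i \<and> a \<le> j \<and> H (i - a) (j - a))
     \<or> (i < a \<and> a \<le> j) \<or> (a \<le> i \<and> j < a)"

definition f_bound :: "real \<Rightarrow> real" where
  "f_bound \<alpha> = (if \<alpha> \<le> 1/2 then 14 else if \<alpha> \<le> 2/3 then 17
                 else if \<alpha> \<le> 3/4 then 20 else 5 / (1 - \<alpha>) + 1)"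

definition eta_poly :: "real \<Rightarrow> real \<Rightarrow> real \<Rightarrow> real" where
  "eta_poly \<alpha> n x = x ^ 3 - ((\<alpha> + 1) * n + \<alpha> - 4) * x ^ 2
     + (\<alpha> * n ^ 2 + (\<alpha> ^ 2 - 2 * \<alpha> - 1) * n - 2 * \<alpha> + 1) * x
     - \<alpha> ^ 2 * n ^ 2 + (5 * \<alpha> ^ 2 - 3 * \<alpha> + 2) * n - 10 * \<alpha> ^ 2 + 15 * \<alpha> - 8"

definition eta :: "real \<Rightarrow> real \<Rightarrow> real" where
  "eta \<alpha> n = Max {x. eta_poly \<alpha> n x = 0}"

end

theory Submission
  imports Defs "HOL-Computational_Algebra.Polynomial"
begin


lemma eta_poly_as_poly:
  "eta_poly al n x = poly [: (- (al ^ 2 * n ^ 2) + (5 * al ^ 2 - 3 * al + 2) * n - 10 * al ^ 2 + 15 * al - 8),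
      al * n ^ 2 + (al ^ 2 - 2 * al - 1) * n - 2 * al + 1, - ((al + 1) * n + al - 4), 1:] x"
  by (simp add: eta_poly_def algebra_simps power2_eq_square power3_eq_cube)

lemma eta_finite: "finite {x. eta_poly al n x = 0}"
proof -
  define p where "p = [: (- (al ^ 2 * n ^ 2) + (5 * al ^ 2 - 3 * al + 2) * n - 10 * al ^ 2 + 15 * al - 8),
      al * n ^ 2 + (al ^ 2 - 2 * al - 1) * n - 2 * al + 1, - ((al + 1) * n + al - 4), 1:]"
  have "p \<noteq> 0" unfolding p_def by simp
  hence "finite {x. poly p x = 0}" by (rule poly_roots_finite)
  moreover have "{x. eta_poly al n x = 0} = {x. poly p x = 0}"
    unfolding p_def by (simp only: eta_poly_as_poly)
  ultimately show ?thesis by simp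
qed

lemma eta_at: "eta_poly al n (n - 3) = -2 * (1 - al) * (1 + al * (n - 5))"
  by (simp add: eta_poly_def algebra_simps power2_eq_square power3_eq_cube)

lemma eta_at_n: "eta_poly al n n = 3*(1-al)*n^2 + n*(3 - 5*al + 5*al^2) - 8 + 15*al - 10*al^2"
  by (simp add: eta_poly_def algebra_simps power2_eq_square power3_eq_cube)

lemma eta_part:
  assumes "0 \<le> al" "al < 1" "n \<ge> 14"
  shows "n - 3 < eta al n"
proof -
  have lo: "eta_poly al n (n-3) \<le> 0"
  proof -
    have "1 + al * (n - 5) \<ge> 0" using assms by (simp add: mult_nonneg_nonneg add_nonneg_nonneg)
    moreover have "-2 * (1 - al) \<le> 0" using assms by simp
    ultimately show ?thesis unfolding eta_at by (metis mult_nonpos_nonneg)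
  qed
  have sq: "0 \<le> (al - 1/2)^2" by simp
  have e1: "3 - 5*al + 5*al^2 = 5*(al-1/2)^2 + 7/4" by (simp add: power2_eq_square algebra_simps)
  have q1: "3 - 5*al + 5*al^2 \<ge> 1" using sq e1 by linarith
  have "al * al \<le> al * 1" using assms by (intro mult_left_mono) auto
  hence "al^2 \<le> al" by (simp add: power2_eq_square)
  hence q2: "- 8 + 15*al - 10*al^2 \<ge> -8" using assms by linarith
  have "14 * 1 \<le> n*(3 - 5*al + 5*al^2)" using mult_mono[of 14 n 1 "3 - 5*al + 5*al^2"] q1 assms(3) by linarith
  moreover have "3*(1-al)*n^2 \<ge> 0" using assms by simp
  ultimately have hi: "0 \<le> eta_poly al n n" using q2 by (simp add: eta_at_n)
  have "continuous_on {n-3..n} (eta_poly al n)"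
    unfolding eta_poly_def by (intro continuous_intros)
  from IVT'[of "eta_poly al n" "n-3" 0 n, OF lo hi _ this]
  obtain x where x: "n - 3 \<le> x" "eta_poly al n x = 0" by auto
  have "x \<noteq> n - 3"
  proof
    assume "x = n - 3"
    with x have "-2 * (1 - al) * (1 + al * (n - 5)) = 0" by (simp add: eta_at)
    moreover have "1 + al * (n - 5) > 0" using assms by (smt (verit) mult_nonneg_nonneg)
    ultimately show False using assms by simp
  qed
  with x have "n - 3 < x" by simp
  also have "x \<le> eta al n" unfolding eta_def
    using eta_finite x(2) by (intro Max_ge) auto
  finally show ?thesis .
qed


lemma row:
  assumes "i < n"
  shows "(\<Sum>j<n. A_alpha al n adj i j * v j) =
     al * real (Defs.degree n adj i) * v i + (1-al) * (\<Sum>j\<in>{j. j<n \<and> adj i j}. v j)"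
proof -
  have "(\<Sum>j<n. A_alpha al n adj i j * v j) =
     (\<Sum>j<n. (if i = j then al * real (Defs.degree n adj i) * v j else 0)) + (1-al) * (\<Sum>j<n. if adj i j then v j else 0)"
  proof -
    have "\<And>j. A_alpha al n adj i j * v j = (if i = j then al * real (Defs.degree n adj i) * v j else 0) + (1-al) * (if adj i j then v j else 0)"
      unfolding A_alpha_def by (auto simp: algebra_simps)
    hence "(\<Sum>j<n. A_alpha al n adj i j * v j) = (\<Sum>j<n. (if i = j then al * real (Defs.degree n adj i) * v j else 0) + (1-al) * (if adj i j then v j else 0))"
      by simp
    also have "\<dots> = (\<Sum>j<n. (if i = j then al * real (Defs.degree n adj i) * v j else 0)) + (1-al) * (\<Sum>j<n. if adj i j then v j else 0)"
      by (simp add: sum.distrib sum_distrib_left)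
    finally show ?thesis .
  qed
  also have "(\<Sum>j<n. (if i = j then al * real (Defs.degree n adj i) * v j else 0)) = al * real (Defs.degree n adj i) * v i"
    using assms by (simp add: sum.delta)
  also have "(\<Sum>j<n. if adj i j then v j else 0) = (\<Sum>j\<in>{j. j<n \<and> adj i j}. v j)"
  proof -
    have "{j. j<n \<and> adj i j} = {j\<in>{..<n}. adj i j}" by auto
    then show ?thesis using sum.inter_filter[of "{..<n}" v "adj i"] by simp
  qed
  finally show ?thesis .
qed

abbreviation "G s \<equiv> graph_join s complete_graph empty_graph"

lemma adj_iff: "G s i j \<longleftrightarrow> (i<s \<and> j<s \<and> i\<noteq>j) \<or> (i<s \<and> s\<le>j) \<or> (s\<le>i \<and> j<s)"
  by (auto simp: graph_join_def complete_graph_def empty_graph_def)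

lemma nbr_clique: "i<s \<Longrightarrow> {j. j<n \<and> G s i j} = {..<n} - {i}"
  by (auto simp: adj_iff)

lemma nbr_ind: "s\<le>i \<Longrightarrow> s \<le> n \<Longrightarrow> {j. j<n \<and> G s i j} = {..<s}"
  by (auto simp: adj_iff)

lemma row_clique:
  assumes "i < s" "s \<le> n"
  shows "(\<Sum>j<n. A_alpha al n (G s) i j * v j) = al * (real n - 1) * v i + (1-al) * ((\<Sum>j<n. v j) - v i)"
proof -
  have d: "Defs.degree n (G s) i = n - 1" unfolding Defs.degree_def nbr_clique[OF assms(1)] using assms by simp
  have "(\<Sum>j\<in>{..<n} - {i}. v j) = (\<Sum>j<n. v j) - v i" using assms by (simp add: sum_diff1)
  then show ?thesis using assms row[of i n al "G s" v] d nbr_clique[OF assms(1)] by (simp add: of_nat_diff)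
qed

lemma row_ind:
  assumes "s \<le> i" "i < n"
  shows "(\<Sum>j<n. A_alpha al n (G s) i j * v j) = al * real s * v i + (1-al) * (\<Sum>j<s. v j)"
proof -
  have sn: "s \<le> n" using assms by simp
  have d: "Defs.degree n (G s) i = s" unfolding Defs.degree_def nbr_ind[OF assms(1) sn] by simp
  then show ?thesis using assms row[of i n al "G s" v] nbr_ind[OF assms(1) sn] by simp
qed

lemma eig_cases:
  assumes "s \<le> n" and eig: "is_eigenvalue n (A_alpha al n (G s)) mu"
  shows "mu = al*real n - 1 \<or> mu = al * real s \<or>
    (mu - (al*real n - 1 + real s*(1-al)))*(mu - al*real s) - real s * real (n-s) * (1-al)^2 = 0"
proof -
  obtain v k where k: "k < n" "v k \<noteq> 0" and ev: "\<And>i. i<n \<Longrightarrow> (\<Sum>j<n. A_alpha al n (G s) i j * v j) = mu * v i"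
    using eig unfolding is_eigenvalue_def by blast
  define X where "X = (\<Sum>j<s. v j)"
  define Y where "Y = (\<Sum>j\<in>{s..<n}. v j)"
  have T: "(\<Sum>j<n. v j) = X + Y"
  proof -
    have "{..<n} = {..<s} \<union> {s..<n}" using assms by auto
    moreover have "sum v ({..<s} \<union> {s..<n}) = X + Y" unfolding X_def Y_def by (rule sum.union_disjoint) auto
    ultimately show ?thesis by simp
  qed
  have c1: "(mu - (al*real n - 1)) * v i = (1-al)*(X+Y)" if "i < s" for i
  proof -
    have "mu * v i = al * (real n - 1) * v i + (1-al) * ((X+Y) - v i)"
      using ev[of i] row_clique[of i s n al v] that assms T by simp
    then show ?thesis by (simp add: algebra_simps)
  qed
  have c2: "(mu - al * real s) * v i = (1-al)*X" if "s \<le> i" "i < n" for i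
  proof -
    have "mu * v i = al * real s * v i + (1-al) * X"
      using ev[of i] row_ind[of s i n al v] that X_def by simp
    then show ?thesis by (simp add: algebra_simps)
  qed
  show ?thesis
  proof (rule ccontr)
    assume H: "\<not> ?thesis"
    hence m1: "mu - (al*real n - 1) \<noteq> 0" and m2: "mu - al * real s \<noteq> 0" by auto
    define q where "q = (mu - (al*real n - 1 + real s*(1-al)))*(mu - al*real s) - real s * real (n-s) * (1-al)^2"
    have q: "q \<noteq> 0" using H q_def by auto
    have s1: "(mu - (al*real n - 1)) * X = real s * (1-al)*(X+Y)"
    proof -
      have "(mu - (al*real n - 1)) * X = (\<Sum>i<s. (mu - (al*real n - 1)) * v i)" unfolding X_def by (simp add: sum_distrib_left)
      also have "\<dots> = (\<Sum>i<s. (1-al)*(X+Y))" using c1 by simp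
      finally show ?thesis by simp
    qed
    have s2: "(mu - al * real s) * Y = real (n-s) * (1-al)*X"
    proof -
      have "(mu - al * real s) * Y = (\<Sum>i\<in>{s..<n}. (mu - al * real s) * v i)" unfolding Y_def by (simp add: sum_distrib_left)
      also have "\<dots> = (\<Sum>i\<in>{s..<n}. (1-al)*X)" using c2 by simp
      finally show ?thesis by simp
    qed
    have s1': "(mu - (al*real n - 1 + real s*(1-al))) * X = real s * (1-al) * Y"
      using s1 by (simp add: algebra_simps)
    have "q * X = 0"
    proof -
      have "q * X = (mu - al*real s) * ((mu - (al*real n - 1 + real s*(1-al))) * X) - real s * real (n-s) * (1-al)^2 * X"
        unfolding q_def by (simp add: algebra_simps)
      also have "\<dots> = real s * (1-al) * ((mu - al*real s) * Y) - real s * real (n-s) * (1-al)^2 * X"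
        unfolding s1' by (simp add: algebra_simps)
      also have "\<dots> = 0" unfolding s2 by (simp add: algebra_simps power2_eq_square)
      finally show ?thesis .
    qed
    hence X0: "X = 0" using q by simp
    have "q * Y = 0"
    proof -
      have "q * Y = (mu - (al*real n - 1 + real s*(1-al))) * ((mu - al*real s) * Y) - real s * real (n-s) * (1-al)^2 * Y"
        unfolding q_def by (simp add: algebra_simps)
      also have "\<dots> = real (n-s) * (1-al) * ((mu - (al*real n - 1 + real s*(1-al))) * X) - real s * real (n-s) * (1-al)^2 * Y"
        unfolding s2 by (simp add: algebra_simps)
      also have "\<dots> = 0" unfolding s1' by (simp add: algebra_simps power2_eq_square)
      finally show ?thesis .
    qed
    hence Y0: "Y = 0" using q by simp
    show False
    proof (cases "k < s")
      case True
      then show ?thesis using c1[OF True] X0 Y0 m1 k by simp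
    next
      case False
      then show ?thesis using c2[of k] X0 m2 k by simp
    qed
  qed
qed



lemma bound_g:
  fixes al S :: real
  assumes "0\<le>al" "al<1" "S\<ge>2" "3*S-1 \<ge> f_bound al"
  shows "(1-al)*(S^2-3*S+1) - S + 2 > 0 \<and> S \<ge> 5 \<and> (1-al)*(3*S-1) > 2"
proof -
  define t where "t = 1 - al"
  define Q where "Q = S^2-3*S+1"
  have t0: "t > 0" "t \<le> 1" using assms t_def by auto
  have P: "Q > 0" if "S \<ge> 5"
  proof -
    have "S*(S-3) \<ge> 0" using that by simp
    then show ?thesis unfolding Q_def by (simp add: power2_eq_square algebra_simps)
  qed
  show ?thesis
  proof (cases "al \<le> 3/4")
    case True
    have t4: "t \<ge> 1/4" using True t_def by simp
    have S5: "S \<ge> 5" using assms True unfolding f_bound_def by (auto split: if_splits)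
    have "t*(3*S-1) \<ge> 1/4 * 14" using t4 S5 by (intro mult_mono) auto
    hence third: "t*(3*S-1) > 2" by simp
    have g: "t*Q - S + 2 > 0"
    proof (cases "al \<le> 1/2")
      case True
      have "t \<ge> 1/2" using True t_def by simp
      have "t*Q \<ge> 1/2*Q" using P S5 \<open>t \<ge> 1/2\<close> by (intro mult_right_mono) auto
      moreover have "S^2 - 5*S \<ge> 0" proof - have "S*(S-5) \<ge> 0" using S5 by simp then show ?thesis by (simp add: power2_eq_square algebra_simps) qed
      ultimately show ?thesis using Q_def by linarith
    next
      case F1: False
      show ?thesis
      proof (cases "al \<le> 2/3")
        case True
        have S6: "S \<ge> 6" using assms True F1 unfolding f_bound_def by (auto split: if_splits)
        have "t \<ge> 1/3" using True t_def by simp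
        have "t*Q \<ge> 1/3*Q" using P S5 \<open>t \<ge> 1/3\<close> by (intro mult_right_mono) auto
        moreover have "S^2 - 6*S \<ge> 0" proof - have "S*(S-6) \<ge> 0" using S6 by simp then show ?thesis by (simp add: power2_eq_square algebra_simps) qed
        ultimately show ?thesis using Q_def by linarith
      next
        case False
        have S7: "S \<ge> 7" using assms \<open>al \<le> 3/4\<close> False F1 unfolding f_bound_def by (auto split: if_splits)
        have "t*Q \<ge> 1/4*Q" using P S5 t4 by (intro mult_right_mono) auto
        moreover have "S^2 - 7*S \<ge> 0" proof - have "S*(S-7) \<ge> 0" using S7 by simp then show ?thesis by (simp add: power2_eq_square algebra_simps) qed
        ultimately show ?thesis using Q_def by linarith
      qed
    qed
    show ?thesis using g S5 third t_def Q_def by simp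
  next
    case False
    have fb: "3*S-1 \<ge> 5/t + 1" using assms False t_def unfolding f_bound_def by simp
    have "5/t > 20" using False t0 t_def by (simp add: field_simps)
    hence S8: "S \<ge> 7" using fb by linarith
    have "t*(3*S-2) \<ge> t * (5/t)" using fb t0 by (intro mult_left_mono) auto
    hence k: "t*(3*S-2) \<ge> 5" using t0 by simp
    have "t*(3*S-1) \<ge> 5" using k t0 by (smt (verit) mult_left_mono)
    hence third: "t*(3*S-1) > 2" by simp
    have "(t*(3*S-2))*Q \<ge> 5*Q" using k P S8 by (intro mult_right_mono) auto
    moreover have "2*S^2 - 7*S \<ge> 0"
    proof - have "S*(2*S-7) \<ge> 0" using S8 by simp then show ?thesis by (simp add: power2_eq_square algebra_simps) qed
    moreover have "(3*S-2)*(t*Q - S + 2) = (t*(3*S-2))*Q - (3*S^2 - 8*S + 4)" by (simp add: algebra_simps power2_eq_square)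
    ultimately have "(3*S-2) * (t*Q - S + 2) > 0" using Q_def by linarith
    moreover have "3*S-2 > 0" using S8 by simp
    ultimately have "t*Q - S + 2 > 0" using zero_less_mult_pos by blast
    then show ?thesis using S8 third t_def Q_def by simp
  qed
qed


lemma quad_bound:
  fixes al S mu :: real
  assumes "0\<le>al" "al<1" "S \<ge> 5" "(1-al)*(S^2-3*S+1) - S + 2 > 0"
    and q: "(mu - (al*(3*S-1) - 1 + S*(1-al)))*(mu - al*S) - S * (2*S-1) * (1-al)^2 = 0"
  shows "mu < 3*S - 4"
proof (rule ccontr)
  assume "\<not> mu < 3*S - 4"
  hence m: "mu - (3*S-4) \<ge> 0" by simp
  define a where "a = al*(3*S-1) - 1 + S*(1-al)"
  define b where "b = al*S"
  define Q where "Q = (\<lambda>x. (x - a)*(x - b) - S * (2*S-1) * (1-al)^2)"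
  have Qm: "Q (3*S-4) = 4*((1-al)*(S^2-3*S+1) - S + 2)"
    unfolding Q_def a_def b_def by (simp add: algebra_simps power2_eq_square)
  have "S*(3-3*al) \<ge> 0" using assms by simp
  moreover have "2*(3*S-4) - a - b = 2*S - 7 + al + S*(3-3*al)" unfolding a_def b_def by (simp add: algebra_simps)
  ultimately have ab: "2*(3*S-4) - a - b \<ge> 0" using assms by linarith
  have diff: "Q mu - Q (3*S-4) = (mu - (3*S-4)) * (mu + (3*S-4) - a - b)"
    unfolding Q_def by (simp add: algebra_simps)
  have "(mu - (3*S-4)) * (mu + (3*S-4) - a - b) \<ge> 0" using m ab by (intro mult_nonneg_nonneg) auto
  moreover have "Q (3*S-4) > 0" using Qm assms(4) by simp
  ultimately have "Q mu > 0" using diff by (metis add_pos_nonneg diff_add_cancel add.commute)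
  moreover have "Q mu = 0" using q unfolding Q_def a_def b_def by simp
  ultimately show False by simp
qed

theorem mainTheorem6:
  fixes \<alpha> :: real and s n :: nat
  assumes "0 \<le> \<alpha>" and "\<alpha> < 1"
    and "s \<ge> 2" and "n = 3 * s - 1"
    and "real n \<ge> f_bound \<alpha>"
  shows "rho_alpha \<alpha> n (graph_join s complete_graph empty_graph) < real n - 3
       \<and> real n - 3 < eta \<alpha> (real n)"
proof -
  define S where "S = real s"
  have rn: "real n = 3*S - 1" using assms(3,4) unfolding S_def by (simp add: of_nat_diff)
  have rns: "real (n - s) = 2*S - 1" using assms(3,4) unfolding S_def by (simp add: of_nat_diff)
  have S2: "S \<ge> 2" using assms(3) S_def by simp
  have B: "(1-\<alpha>)*(S^2-3*S+1) - S + 2 > 0 \<and> S \<ge> 5 \<and> (1-\<alpha>)*(3*S-1) > 2"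
    using bound_g[OF assms(1,2) S2] assms(5) rn by simp
  have sn: "s \<le> n" "s + 1 < n" using assms(3,4) by auto
  define E where "E = {mu. is_eigenvalue n (A_alpha \<alpha> n (G s)) mu}"
  define a where "a = \<alpha>*real n - 1 + real s*(1-\<alpha>)"
  define b where "b = \<alpha> * real s"
  define c where "c = real s * real (n-s) * (1-\<alpha>)^2"
  have bnd: "mu < real n - 3" if "mu \<in> E" for mu
  proof -
    have "mu = \<alpha>*real n - 1 \<or> mu = \<alpha> * real s \<or>
      (mu - (\<alpha>*real n - 1 + real s*(1-\<alpha>)))*(mu - \<alpha>*real s) - real s * real (n-s) * (1-\<alpha>)^2 = 0"
      using eig_cases[OF sn(1)] that unfolding E_def by blast
    moreover have "\<alpha>*real n - 1 < real n - 3"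
    proof -
      have "(1-\<alpha>)*real n > 2" using B rn by simp
      moreover have "(1-\<alpha>)*real n = real n - \<alpha>*real n" by (simp add: algebra_simps)
      ultimately show ?thesis by linarith
    qed
    moreover have "\<alpha> * real s < real n - 3"
    proof -
      have "\<alpha> * real s \<le> real s" using assms by (intro mult_left_le_one_le) auto
      moreover have "real s \<ge> 5" using B S_def by simp
      ultimately show ?thesis using rn S_def by linarith
    qed
    moreover have "mu < real n - 3" if "(mu - (\<alpha>*real n - 1 + real s*(1-\<alpha>)))*(mu - \<alpha>*real s) - real s * real (n-s) * (1-\<alpha>)^2 = 0"
      using quad_bound[OF assms(1,2), of S mu] B that rn rns S_def by simp
    ultimately show ?thesis by blast
  qed
  have fin: "finite E"
  proof -
    define p where "p = [: a*b - c, -(a+b), 1 :]"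
    have "p \<noteq> 0" unfolding p_def by simp
    hence "finite {x. poly p x = 0}" by (rule poly_roots_finite)
    moreover have "E \<subseteq> {\<alpha>*real n - 1, \<alpha> * real s} \<union> {x. poly p x = 0}"
    proof
      fix mu assume "mu \<in> E"
      hence "mu = \<alpha>*real n - 1 \<or> mu = \<alpha> * real s \<or> (mu - a)*(mu - b) - c = 0"
        using eig_cases[OF sn(1)] unfolding E_def a_def b_def c_def by blast
      moreover have "poly p mu = (mu - a)*(mu - b) - c" unfolding p_def by (simp add: algebra_simps)
      ultimately show "mu \<in> {\<alpha>*real n - 1, \<alpha> * real s} \<union> {x. poly p x = 0}" by auto
    qed
    ultimately show ?thesis by (meson finite.emptyI finite.insertI finite_Un finite_subset)
  qed
  have ne: "\<alpha> * real s \<in> E"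
  proof -
    define v where "v = (\<lambda>j::nat. (if j = s then 1 else 0) - (if j = s+1 then 1 else (0::real)))"
    have T: "(\<Sum>j<n. v j) = 0"
    proof -
      have "(\<Sum>j<n. v j) = (\<Sum>j<n. if j = s then 1 else 0) - (\<Sum>j<n. if j = s+1 then 1 else (0::real))"
        unfolding v_def by (rule sum_subtractf)
      also have "\<dots> = 0" using sn by simp
      finally show ?thesis .
    qed
    have X: "(\<Sum>j<s. v j) = 0"
    proof -
      have "(\<Sum>j<s. v j) = (\<Sum>j<s. if j = s then 1 else 0) - (\<Sum>j<s. if j = s+1 then 1 else (0::real))"
        unfolding v_def by (rule sum_subtractf)
      also have "\<dots> = 0" by simp
      finally show ?thesis .
    qed
    have ev: "(\<Sum>j<n. A_alpha \<alpha> n (G s) i j * v j) = \<alpha> * real s * v i" if "i < n" for i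
    proof (cases "i < s")
      case True
      have v0: "v i = 0" using True unfolding v_def by simp
      have "(\<Sum>j<n. A_alpha \<alpha> n (G s) i j * v j) = \<alpha> * (real n - 1) * v i + (1-\<alpha>) * ((\<Sum>j<n. v j) - v i)"
        by (rule row_clique[OF True sn(1)])
      also have "\<dots> = 0" unfolding v0 T by simp
      finally show ?thesis unfolding v0 by simp
    next
      case False
      hence "s \<le> i" by simp
      have "(\<Sum>j<n. A_alpha \<alpha> n (G s) i j * v j) = \<alpha> * real s * v i + (1-\<alpha>) * (\<Sum>j<s. v j)"
        by (rule row_ind[OF \<open>s \<le> i\<close> that])
      then show ?thesis unfolding X by simp
    qed
    have vs: "v s \<noteq> 0" unfolding v_def by simp
    have "is_eigenvalue n (A_alpha \<alpha> n (G s)) (\<alpha> * real s)"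
      unfolding is_eigenvalue_def
    proof (intro exI[of _ v] conjI allI impI)
      show "\<exists>i<n. v i \<noteq> 0" using vs sn(2) by (intro exI[of _ s]) auto
    next
      fix i assume "i < n" then show "(\<Sum>j<n. A_alpha \<alpha> n (G s) i j * v j) = \<alpha> * real s * v i" by (rule ev)
    qed
    then show ?thesis unfolding E_def by simp
  qed
  have req: "rho_alpha \<alpha> n (G s) = Max E" unfolding rho_alpha_def E_def by (rule refl)
  have Ene: "E \<noteq> {}" using ne by blast
  have mx: "Max E \<in> E" by (rule Max_in[OF fin Ene])
  have "Max E < real n - 3" using bnd[OF mx] .
  hence part1: "rho_alpha \<alpha> n (G s) < real n - 3" using req by simp
  have "S \<ge> 5" using B by blast
  hence r14: "real n \<ge> 14" using rn by linarith
  have part2: "real n - 3 < eta \<alpha> (real n)" by (rule eta_part[OF assms(1,2) r14])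
  show ?thesis using part1 part2 by simp
qed

end
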